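(* Let $p>2$, $\mathcal{C}=\{x\in\mathbb{R}^m:\|x\|_p\leq1\}$, and let $f:\mathbb{R}^m\to\mathbb{R}$ be convex and $L$-smooth (its gradient is $L$-Lipschitz). Assume there is $c>0$ with $\inf_{x\in\mathcal{C}}\|\nabla f(x)\|>c$, and assume the minimizer $x^*$ of $f$ over $\mathcal{C}$ has all coordinates (in the canonical basis) nonzero. Then the Frank-Wolfe algorithm, run with either exact line-search or short steps, converges linearly: there exist $K>0$ and $\rho\in(0,1)$ such that $f(x_t)-f(x^* )\leq K\rho^t$ for all $t\geq0$.
   Context: The Frank-Wolfe algorithm on $\mathcal{C}$ starts from $x_0\in\mathcal{C}$ and iterates $v_t\in\arg\min_{v\in\mathcal{C}}\langle\nabla f(x_t),v\rangle$, $x_{t+1}=x_t+\gamma_t(v_t-x_t)$, where with exact line-search $\gamma_t\in\arg\min_{\gamma\in[0,1]}f(x_t+\gamma(v_t-x_t))$, and with short steps $\gamma_t=\min\{1,\langle\nabla f(x_t),x_t-v_t\rangle/(L\|v_t-x_t\|^2)\}$ (with $\|\cdot\|$ the norm with respect to which $f$ is $L$-smooth). *)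

theory Defs
  imports "HOL-Analysis.Analysis"
begin

definition lp_norm :: "real \<Rightarrow> real ^ 'm \<Rightarrow> real" where
  "lp_norm p x = (\<Sum>i\<in>UNIV. \<bar>x $ i\<bar> powr p) powr (1 / p)"

definition lp_ball :: "real \<Rightarrow> (real ^ 'm) set" where
  "lp_ball p = {x. lp_norm p x \<le> 1}"

definition fw_lmo :: "(real ^ 'm) set \<Rightarrow> real ^ 'm \<Rightarrow> real ^ 'm \<Rightarrow> bool" where
  "fw_lmo C g v \<longleftrightarrow> v \<in> C \<and> (\<forall>u\<in>C. g \<bullet> v \<le> g \<bullet> u)"

definition exact_ls :: "(real ^ 'm \<Rightarrow> real) \<Rightarrow> real ^ 'm \<Rightarrow> real ^ 'm \<Rightarrow> real \<Rightarrow> bool" where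
  "exact_ls f x v \<gamma> \<longleftrightarrow> \<gamma> \<in> {0..1} \<and>
     (\<forall>g\<in>{0..1}. f (x + \<gamma> *\<^sub>R (v - x)) \<le> f (x + g *\<^sub>R (v - x)))"

definition short_step :: "real \<Rightarrow> real ^ 'm \<Rightarrow> real ^ 'm \<Rightarrow> real ^ 'm \<Rightarrow> real" where
  "short_step L g x v = min 1 ((g \<bullet> (x - v)) / (L * (norm (v - x))\<^sup>2))"

end

theory Submission
  imports Defs
begin


lemma powr_cvx0:
  fixes x y t p :: real
  assumes "0 \<le> x" "0 \<le> y" "0 \<le> t" "t \<le> 1" "p \<ge> 1"
  shows "(t*x + (1-t)*y) powr p \<le> t * x powr p + (1-t) * y powr p"
proof -
  have key: "(s*z) powr p \<le> s * z powr p" if "0 \<le> s" "s \<le> 1" "0 \<le> z" for s z :: real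
  proof -
    have "(s*z) powr p = s powr p * z powr p" using that by (simp add: powr_mult)
    also have "s powr p \<le> s"
    proof (cases "s = 0")
      case False thus ?thesis using that assms powr_le_one_le by auto
    qed simp
    hence "s powr p * z powr p \<le> s * z powr p" by (simp add: mult_right_mono)
    finally show ?thesis .
  qed
  show ?thesis
  proof (cases "x = 0 \<or> y = 0")
    case True
    thus ?thesis using key[of t x] key[of "1-t" y] assms by auto
  next
    case False
    hence "x > 0" "y > 0" using assms by auto
    thus ?thesis using convex_onD[OF powr_convex[OF assms(5)], of "1-t" x y] assms by simp
  qed
qed

lemma abs_powr_convex:
  fixes p :: real assumes "p \<ge> 1"
  shows "convex_on UNIV (\<lambda>x::real. \<bar>x\<bar> powr p)"
proof (rule convex_onI)
  fix t x y :: real assume t: "0 < t" "t < 1"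
  have "\<bar>(1-t)*x + t*y\<bar> \<le> \<bar>(1-t)*x\<bar> + \<bar>t*y\<bar>" by (rule abs_triangle_ineq)
  also have "\<dots> = (1-t)*\<bar>x\<bar> + t*\<bar>y\<bar>" using t by (simp add: abs_mult)
  finally have "\<bar>(1-t)*x + t*y\<bar> \<le> (1-t)*\<bar>x\<bar> + t*\<bar>y\<bar>" .
  hence "\<bar>(1-t)*x + t*y\<bar> powr p \<le> ((1-t)*\<bar>x\<bar> + t*\<bar>y\<bar>) powr p"
    using assms by (intro powr_mono2) auto
  also have "\<dots> \<le> (1-t)*\<bar>x\<bar> powr p + (1-(1-t))*\<bar>y\<bar> powr p"
    using powr_cvx0[of "\<bar>x\<bar>" "\<bar>y\<bar>" "1-t" p] t assms by auto
  finally show "\<bar>(1-t) *\<^sub>R x + t *\<^sub>R y\<bar> powr p \<le> (1-t) * \<bar>x\<bar> powr p + t * \<bar>y\<bar> powr p" by simp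
qed simp

definition phi :: "real \<Rightarrow> real ^ 'm \<Rightarrow> real" where
  "phi p x = (\<Sum>i\<in>UNIV. \<bar>x $ i\<bar> powr p)"

lemma phi_convex: "p \<ge> 1 \<Longrightarrow> convex_on UNIV (phi p)"
proof (rule convex_onI)
  fix t :: real and x y :: "real^'m"
  assume p: "p \<ge> 1" and t: "0 < t" "t < 1"
  have "phi p ((1 - t) *\<^sub>R x + t *\<^sub>R y) = (\<Sum>i\<in>UNIV. \<bar>(1-t) * x$i + t * y$i\<bar> powr p)"
    unfolding phi_def by simp
  also have "\<dots> \<le> (\<Sum>i\<in>UNIV. (1-t) * \<bar>x$i\<bar> powr p + t * \<bar>y$i\<bar> powr p)"
    using convex_onD[OF abs_powr_convex[OF p], of t] t by (intro sum_mono) simp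
  also have "\<dots> = (1-t) * phi p x + t * phi p y"
    unfolding phi_def by (simp add: sum.distrib sum_distrib_left)
  finally show "phi p ((1 - t) *\<^sub>R x + t *\<^sub>R y) \<le> (1 - t) * phi p x + t * phi p y" .
qed simp

lemma ball_iff: "p > 0 \<Longrightarrow> x \<in> lp_ball p \<longleftrightarrow> phi p x \<le> 1"
proof -
  assume p: "p > 0"
  have S: "phi p x \<ge> 0" unfolding phi_def by (simp add: sum_nonneg)
  show ?thesis
  proof
    assume "x \<in> lp_ball p"
    hence h: "phi p x powr (1/p) \<le> 1" unfolding lp_ball_def lp_norm_def phi_def by simp
    show "phi p x \<le> 1"
    proof (rule ccontr)
      assume "\<not> phi p x \<le> 1"
      hence "1 < phi p x powr (1/p)" using p by (simp add: gr_one_powr)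
      thus False using h by simp
    qed
  next
    assume "phi p x \<le> 1"
    hence "phi p x powr (1/p) \<le> 1" using p S by (simp add: powr_le1)
    thus "x \<in> lp_ball p" unfolding lp_ball_def lp_norm_def phi_def by simp
  qed
qed

lemma ball_convex: "p \<ge> 1 \<Longrightarrow> convex (lp_ball p :: (real^'m) set)"
proof -
  assume p: "p \<ge> 1"
  have "lp_ball p = {x::real^'m. phi p x \<le> 1}" using ball_iff[of p] p by auto
  moreover have "convex {x::real^'m. phi p x \<le> 1}"
  proof (rule convexI)
    fix x y :: "real^'m" and u v :: real
    assume xy: "x \<in> {x. phi p x \<le> 1}" "y \<in> {x. phi p x \<le> 1}" and uv: "0 \<le> u" "0 \<le> v" "u + v = 1"
    have "phi p ((1-v) *\<^sub>R x + v *\<^sub>R y) \<le> (1-v) * phi p x + v * phi p y"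
      using convex_onD[OF phi_convex[OF p], of v x y] uv by auto
    also have "\<dots> \<le> (1-v) * 1 + v * 1" using xy uv
      by (intro add_mono mult_left_mono) auto
    finally show "u *\<^sub>R x + v *\<^sub>R y \<in> {x. phi p x \<le> 1}" using uv by (simp add: eq_diff_eq[symmetric])
  qed
  ultimately show ?thesis by simp
qed

lemma breg_pos:
  fixes a y p :: real
  assumes p: "p > 2" and a: "0 < a" "a \<le> 1" and y: "\<bar>y\<bar> \<le> 1"
  shows "\<bar>y\<bar> powr p \<ge> a powr p + p * a powr (p-1) * (y - a)
           + min (p*(p-1)*(a/2) powr (p-2)/2) ((p-2)*a powr (p-1)/2) * (y-a)^2"
proof -
  define mu where "mu = p*(p-1)*(a/2) powr (p-2)/2"
  define c where "c = min mu ((p-2)*a powr (p-1)/2)"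
  have cmu: "c \<le> mu" "c \<le> (p-2)*a powr (p-1)/2" unfolding c_def by auto
  show ?thesis
  proof (cases "y \<ge> a/2")
    case True
    define E where "E s = s powr p - a powr p - p * a powr (p-1)*(s-a) - mu*(s-a)^2" for s
    define E1 where "E1 s = p * s powr (p-1) - p * a powr (p-1) - 2*mu*(s-a)" for s
    have dE: "(E has_real_derivative E1 s) (at s)" if "s > 0" for s
      unfolding E_def E1_def using that
      by (auto intro!: derivative_eq_intros simp: algebra_simps)
    have dE1: "(E1 has_real_derivative (p*((p-1) * (s powr (p-2))) - 2*mu)) (at s)" if "s > 0" for s
      unfolding E1_def using that
      by (auto intro!: derivative_eq_intros simp: algebra_simps)
    have E2: "p*((p-1) * (s powr (p-2))) - 2*mu \<ge> 0" if "s \<ge> a/2" for s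
    proof -
      have "(a/2) powr (p-2) \<le> s powr (p-2)" using that a p by (intro powr_mono2) auto
      thus ?thesis unfolding mu_def using p by (simp add: mult_left_mono)
    qed
    have E1a: "E1 a = 0" "E a = 0" unfolding E1_def E_def by auto
    have "E y \<ge> 0"
    proof (cases "y \<ge> a")
      case True
      have "E1 s \<ge> 0" if "s \<in> {a..y}" for s
        using deriv_nonneg_imp_mono[of a s E1 "\<lambda>s. p*((p-1) * (s powr (p-2))) - 2*mu"] that dE1 E2 a E1a
        by auto
      hence "E a \<le> E y" using deriv_nonneg_imp_mono[of a y E E1] dE a True by auto
      thus ?thesis using E1a by simp
    next
      case False
      have "E1 s \<le> 0" if "s \<in> {y..a}" for s
        using deriv_nonneg_imp_mono[of s a E1 "\<lambda>s. p*((p-1) * (s powr (p-2))) - 2*mu"] that dE1 E2 a E1a \<open>y \<ge> a/2\<close>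
        by auto
      hence "E a \<le> E y" using deriv_nonpos_imp_antimono[of y a E E1] dE a False \<open>y \<ge> a/2\<close> by auto
      thus ?thesis using E1a by simp
    qed
    hence "y powr p \<ge> a powr p + p * a powr (p-1) * (y - a) + mu * (y-a)^2"
      unfolding E_def by simp
    moreover have "c * (y-a)^2 \<le> mu * (y-a)^2" using cmu by (simp add: mult_right_mono)
    moreover have "\<bar>y\<bar> = y" using True a by simp
    ultimately show ?thesis unfolding c_def mu_def by linarith
  next
    case False
    define A where "A = a powr (p-1)"
    have A: "A > 0" unfolding A_def using a by simp
    have ap: "a powr p = A * a" unfolding A_def using a by (simp add: powr_diff)
    have y2: "(y-a)^2 \<le> 2*(a-y)"
    proof -
      have h: "0 \<le> a-y" "a-y \<le> 2" using y a False by auto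
      have "(a-y)*(a-y) \<le> 2*(a-y)" using mult_right_mono[OF h(2) h(1)] .
      moreover have "(y-a)^2 = (a-y)*(a-y)" by (simp add: power2_eq_square algebra_simps)
      ultimately show ?thesis by simp
    qed
    have "c*(y-a)^2 \<le> (p-2)*A/2*(y-a)^2" using cmu unfolding A_def by (intro mult_right_mono) auto
    also have "\<dots> \<le> (p-2)*A/2*(2*(a-y))" using y2 p A by (intro mult_left_mono) auto
    also have "\<dots> = (p-2)*A*(a-y)" by simp
    finally have "c*(y-a)^2 \<le> (p-2)*A*(a-y)" .
    moreover have "A*a + p*A*(y-a) + (p-2)*A*(a-y) = A*(2*y - a)" by (simp add: algebra_simps)
    moreover have "A*(2*y-a) < 0" using A False by (simp add: mult_pos_neg)
    moreover have "\<bar>y\<bar> powr p \<ge> 0" by simp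
    ultimately show ?thesis unfolding c_def[symmetric] mu_def[symmetric] using ap unfolding A_def by linarith
  qed
qed


definition cc :: "real \<Rightarrow> real \<Rightarrow> real" where
  "cc p \<alpha> = min (p*(p-1)*(\<alpha>/2) powr (p-2)/2) ((p-2)*\<alpha> powr (p-1)/2)"

lemma cc_pos: "p > 2 \<Longrightarrow> \<alpha> > 0 \<Longrightarrow> cc p \<alpha> > 0"
  unfolding cc_def by auto

lemma breg:
  fixes a y p :: real
  assumes p: "p > 2" and a: "a \<noteq> 0" "\<bar>a\<bar> \<le> 1" and y: "\<bar>y\<bar> \<le> 1"
  shows "\<bar>y\<bar> powr p \<ge> \<bar>a\<bar> powr p + p * (sgn a * \<bar>a\<bar> powr (p-1)) * (y - a) + cc p \<bar>a\<bar> * (y-a)^2"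
proof (cases "a > 0")
  case True
  thus ?thesis using breg_pos[OF p True _ y] a unfolding cc_def by simp
next
  case False
  hence "-a > 0" using a by simp
  from breg_pos[OF p this _, of "-y"] a y False
  show ?thesis unfolding cc_def by (simp add: algebra_simps power2_commute)
qed

lemma deriv_abs_powr:
  fixes a w p :: real
  assumes a: "a \<noteq> 0"
  shows "((\<lambda>s. \<bar>a + s*w\<bar> powr p) has_real_derivative (p * (sgn a * \<bar>a\<bar> powr (p-1)) * w)) (at 0)"
proof -
  define d where "d = \<bar>a\<bar> / (\<bar>w\<bar> + 1)"
  have d: "d > 0" unfolding d_def using a by simp
  have small: "\<bar>s*w\<bar> < \<bar>a\<bar>" if "\<bar>s\<bar> < d" for s
  proof -
    have "\<bar>s*w\<bar> = \<bar>s\<bar>*\<bar>w\<bar>" by (simp add: abs_mult)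
    also have "\<dots> \<le> d * \<bar>w\<bar>" using that by (simp add: mult_right_mono)
    also have "\<dots> < d * (\<bar>w\<bar> + 1)" using d by simp
    also have "\<dots> = \<bar>a\<bar>" unfolding d_def by simp
    finally show ?thesis .
  qed
  show ?thesis
  proof (cases "a > 0")
    case True
    have ev: "eventually (\<lambda>s. \<bar>a + s*w\<bar> powr p = (a + s*w) powr p) (nhds 0)"
      unfolding eventually_nhds_metric
    proof (intro exI[of _ d] conjI allI impI)
      fix s :: real assume "dist s 0 < d"
      hence "\<bar>s*w\<bar> < \<bar>a\<bar>" using small by simp
      hence "a + s*w > 0" using True by linarith
      thus "\<bar>a + s*w\<bar> powr p = (a + s*w) powr p" by simp
    qed (rule d)
    have "((\<lambda>s. (a + s*w) powr p) has_real_derivative (p * (a + 0*w) powr (p-1) * w)) (at 0)"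
      using True by (auto intro!: derivative_eq_intros)
    hence "((\<lambda>s. (a + s*w) powr p) has_real_derivative (p * (sgn a * \<bar>a\<bar> powr (p-1)) * w)) (at 0)"
      using True by simp
    thus ?thesis using DERIV_cong_ev[OF refl ev refl] by simp
  next
    case False
    hence aneg: "a < 0" using a by simp
    have ev: "eventually (\<lambda>s. \<bar>a + s*w\<bar> powr p = (-(a + s*w)) powr p) (nhds 0)"
      unfolding eventually_nhds_metric
    proof (intro exI[of _ d] conjI allI impI)
      fix s :: real assume "dist s 0 < d"
      hence "\<bar>s*w\<bar> < \<bar>a\<bar>" using small by simp
      hence "a + s*w < 0" using aneg by linarith
      thus "\<bar>a + s*w\<bar> powr p = (-(a + s*w)) powr p" by simp
    qed (rule d)
    have "((\<lambda>s. (-(a + s*w)) powr p) has_real_derivative (p * (-(a + 0*w)) powr (p-1) * (-w))) (at 0)"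
      using aneg by (auto intro!: derivative_eq_intros)
    hence "((\<lambda>s. (-(a + s*w)) powr p) has_real_derivative (p * (sgn a * \<bar>a\<bar> powr (p-1)) * w)) (at 0)"
      using aneg by simp
    thus ?thesis using DERIV_cong_ev[OF refl ev refl] by simp
  qed
qed


lemma line_deriv:
  fixes f :: "real^'m \<Rightarrow> real" and f' :: "real^'m \<Rightarrow> real^'m"
  assumes grad: "\<And>y. (f has_derivative (\<lambda>h. f' y \<bullet> h)) (at y)"
  shows "((\<lambda>s. f (y + s *\<^sub>R d)) has_real_derivative (f' (y + s *\<^sub>R d) \<bullet> d)) (at s)"
proof -
  have l: "((\<lambda>s. y + s *\<^sub>R d) has_derivative (\<lambda>h. h *\<^sub>R d)) (at s)"
    by (auto intro!: derivative_eq_intros)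
  have "((\<lambda>s. f (y + s *\<^sub>R d)) has_derivative (\<lambda>h. f' (y + s *\<^sub>R d) \<bullet> (h *\<^sub>R d))) (at s)"
    using has_derivative_compose[OF l grad] by simp
  moreover have "(\<lambda>h. f' (y + s *\<^sub>R d) \<bullet> (h *\<^sub>R d)) = (*) (f' (y + s *\<^sub>R d) \<bullet> d)"
    by (auto simp: mult.commute)
  ultimately show ?thesis unfolding has_field_derivative_def by simp
qed

lemma grad_ineq:
  fixes f :: "real^'m \<Rightarrow> real" and f' :: "real^'m \<Rightarrow> real^'m"
  assumes grad: "\<And>y. (f has_derivative (\<lambda>h. f' y \<bullet> h)) (at y)"
    and cvx: "convex_on UNIV f"
  shows "f z \<ge> f y + f' y \<bullet> (z - y)"
proof -
  define g where "g s = f (y + s *\<^sub>R (z - y))" for s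
  have gc: "convex_on UNIV g"
  proof (rule convex_onI)
    fix t a b :: real assume t: "0 < t" "t < 1"
    have "y + ((1 - t) *\<^sub>R a + t *\<^sub>R b) *\<^sub>R (z - y)
          = (1 - t) *\<^sub>R (y + a *\<^sub>R (z - y)) + t *\<^sub>R (y + b *\<^sub>R (z - y))"
      by (simp add: algebra_simps)
    thus "g ((1 - t) *\<^sub>R a + t *\<^sub>R b) \<le> (1 - t) * g a + t * g b"
      unfolding g_def using convex_onD[OF cvx, of t] t by simp
  qed simp
  have d: "(g has_field_derivative (f' y \<bullet> (z - y))) (at 0 within UNIV)"
    using line_deriv[OF grad, of y "z - y" 0] unfolding g_def by simp
  have "g 1 - g 0 \<ge> (f' y \<bullet> (z - y)) * (1 - 0)"
    by (rule convex_on_imp_above_tangent[OF gc _ _ _ d]) auto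
  thus ?thesis unfolding g_def by simp
qed

lemma descent:
  fixes f :: "real^'m \<Rightarrow> real" and f' :: "real^'m \<Rightarrow> real^'m"
  assumes grad: "\<And>y. (f has_derivative (\<lambda>h. f' y \<bullet> h)) (at y)"
    and smooth: "\<And>y z. norm (f' y - f' z) \<le> L * norm (y - z)"
    and L: "L \<ge> 0" and s: "s \<ge> 0"
  shows "f (y + s *\<^sub>R d) \<le> f y + s * (f' y \<bullet> d) + L/2 * s^2 * (norm d)^2"
proof -
  define \<psi> where "\<psi> u = f (y + u *\<^sub>R d) - f y - u * (f' y \<bullet> d) - L/2 * u^2 * (norm d)^2" for u
  define \<psi>' where "\<psi>' u = f' (y + u *\<^sub>R d) \<bullet> d - f' y \<bullet> d - L * u * (norm d)^2" for u
  have D: "(\<psi> has_real_derivative \<psi>' u) (at u)" for u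
    unfolding \<psi>_def \<psi>'_def
    by (rule derivative_eq_intros line_deriv[OF grad] refl | simp)+
  have N: "\<psi>' u \<le> 0" if "u \<in> {0..s}" for u
  proof -
    have "f' (y + u *\<^sub>R d) \<bullet> d - f' y \<bullet> d = (f' (y + u *\<^sub>R d) - f' y) \<bullet> d"
      by (simp add: inner_diff_left)
    also have "\<dots> \<le> norm (f' (y + u *\<^sub>R d) - f' y) * norm d" by (rule norm_cauchy_schwarz)
    also have "\<dots> \<le> (L * norm (u *\<^sub>R d)) * norm d"
      using smooth[of "y + u *\<^sub>R d" y] by (simp add: mult_right_mono)
    also have "\<dots> = L * u * (norm d)^2" using that by (simp add: power2_eq_square)
    finally show ?thesis unfolding \<psi>'_def by simp
  qed
  have "\<psi> s \<le> \<psi> 0" by (rule deriv_nonpos_imp_antimono[of 0 s \<psi> \<psi>']) (use D N s in auto)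
  thus ?thesis unfolding \<psi>_def by simp
qed



lemma coord_bound: "p > 0 \<Longrightarrow> x \<in> lp_ball p \<Longrightarrow> \<bar>x $ i\<bar> \<le> 1"
proof -
  assume p: "p > 0" and x: "x \<in> lp_ball p"
  have "\<bar>x $ i\<bar> powr p \<le> phi p x" unfolding phi_def
    by (rule member_le_sum) auto
  also have "\<dots> \<le> 1" using ball_iff[OF p, of x] x by blast
  finally have h: "\<bar>x $ i\<bar> powr p \<le> 1" .
  show ?thesis
  proof (rule ccontr)
    assume "\<not> \<bar>x $ i\<bar> \<le> 1"
    hence "1 < \<bar>x $ i\<bar> powr p" using p by (simp add: gr_one_powr)
    thus False using h by simp
  qed
qed

lemma phi_line_deriv:
  fixes a w :: "real^'m"
  assumes a: "\<And>i. a $ i \<noteq> 0"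
  shows "((\<lambda>s. phi p (a + s *\<^sub>R w)) has_real_derivative
           (p * ((\<chi> i. sgn (a$i) * \<bar>a$i\<bar> powr (p-1)) \<bullet> w))) (at 0)"
proof -
  have "((\<lambda>s. \<Sum>i\<in>UNIV. \<bar>a$i + s * w$i\<bar> powr p) has_real_derivative
          (\<Sum>i\<in>UNIV. p * (sgn (a$i) * \<bar>a$i\<bar> powr (p-1)) * w$i)) (at 0)"
    by (rule DERIV_sum) (rule deriv_abs_powr[OF a])
  moreover have "(\<Sum>i\<in>UNIV. p * (sgn (a$i) * \<bar>a$i\<bar> powr (p-1)) * w$i)
     = p * ((\<chi> i. sgn (a$i) * \<bar>a$i\<bar> powr (p-1)) \<bullet> w)"
    by (simp add: inner_vec_def sum_distrib_left mult.assoc)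
  ultimately show ?thesis unfolding phi_def by simp
qed

lemma first_order:
  fixes f :: "real^'m \<Rightarrow> real" and f' :: "real^'m \<Rightarrow> real^'m"
  assumes grad: "\<And>y. (f has_derivative (\<lambda>h. f' y \<bullet> h)) (at y)"
    and C: "convex C" and a: "a \<in> C" and y: "y \<in> C" and min: "\<And>z. z \<in> C \<Longrightarrow> f a \<le> f z"
  shows "f' a \<bullet> (y - a) \<ge> 0"
proof (rule ccontr)
  assume "\<not> ?thesis"
  hence neg: "f' a \<bullet> (y - a) < 0" by simp
  have "((\<lambda>s. f (a + s *\<^sub>R (y - a))) has_real_derivative (f' a \<bullet> (y - a))) (at 0)"
    using line_deriv[OF grad, of a "y - a" 0] by simp
  from DERIV_neg_dec_right[OF this neg] obtain d where d: "d > 0"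
    and dd: "\<And>h. h > 0 \<Longrightarrow> h < d \<Longrightarrow> f (a + (0 + h) *\<^sub>R (y - a)) < f (a + 0 *\<^sub>R (y - a))" by blast
  define h where "h = min d 1 / 2"
  have h: "h > 0" "h < d" "h \<le> 1" unfolding h_def using d by auto
  have "a + h *\<^sub>R (y - a) = (1 - h) *\<^sub>R a + h *\<^sub>R y" by (simp add: algebra_simps)
  also have "\<dots> \<in> C" using C a y h unfolding convex_def by auto
  finally have "f a \<le> f (a + h *\<^sub>R (y - a))" using min by blast
  moreover have "f (a + h *\<^sub>R (y - a)) < f a" using dd[OF h(1) h(2)] by simp
  ultimately show False by simp
qed



lemma norm_sq_vec: "(norm (x::real^'m))^2 = (\<Sum>i\<in>UNIV. (x$i)^2)"
proof -
  have "(norm x)^2 = x \<bullet> x" by (rule power2_norm_eq_inner)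
  also have "\<dots> = (\<Sum>i\<in>UNIV. x$i * x$i)" by (simp add: inner_vec_def)
  finally show ?thesis by (simp add: power2_eq_square)
qed

lemma growth:
  fixes f :: "real^'m \<Rightarrow> real" and f' :: "real^'m \<Rightarrow> real^'m" and a :: "real^'m"
  assumes p: "p > 2"
    and grad: "\<And>y. (f has_derivative (\<lambda>h. f' y \<bullet> h)) (at y)"
    and aC: "a \<in> lp_ball p" and min: "\<And>y. y \<in> lp_ball p \<Longrightarrow> f a \<le> f y"
    and nz: "\<And>i. a$i \<noteq> 0" and g0: "f' a \<noteq> 0"
  shows "\<exists>\<kappa>>0. \<forall>y\<in>lp_ball p. f' a \<bullet> (y - a) \<ge> \<kappa> * (norm (y - a))^2"
proof -
  define n where "n = (\<chi> i. sgn (a$i) * \<bar>a$i\<bar> powr (p-1))"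
  define g where "g = f' a"
  have p0: "p > 0" "p \<ge> 1" using p by auto
  have K1: "g \<bullet> w \<ge> 0" if nw: "n \<bullet> w < 0" for w
  proof (rule ccontr)
    assume "\<not> g \<bullet> w \<ge> 0"
    hence gw: "g \<bullet> w < 0" by simp
    have "p * (n \<bullet> w) < 0" using p nw by (simp add: mult_pos_neg)
    from DERIV_neg_dec_right[OF phi_line_deriv[OF nz, of p w, folded n_def] this]
    obtain d1 where d1: "d1 > 0" and dd1: "\<And>h. h > 0 \<Longrightarrow> h < d1 \<Longrightarrow> phi p (a + (0 + h) *\<^sub>R w) < phi p (a + 0 *\<^sub>R w)"
      by blast
    have "((\<lambda>s. f (a + s *\<^sub>R w)) has_real_derivative (g \<bullet> w)) (at 0)"
      using line_deriv[OF grad, of a w 0] by (simp add: g_def)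
    from DERIV_neg_dec_right[OF this gw]
    obtain d2 where d2: "d2 > 0" and dd2: "\<And>h. h > 0 \<Longrightarrow> h < d2 \<Longrightarrow> f (a + (0 + h) *\<^sub>R w) < f (a + 0 *\<^sub>R w)"
      by blast
    define h where "h = min d1 d2 / 2"
    have h: "h > 0" "h < d1" "h < d2" unfolding h_def using d1 d2 by auto
    have "phi p (a + h *\<^sub>R w) < phi p a" using dd1[OF h(1) h(2)] by simp
    also have "\<dots> \<le> 1" using aC ball_iff[OF p0(1), of a] by blast
    finally have "a + h *\<^sub>R w \<in> lp_ball p" using ball_iff[OF p0(1), of "a + h *\<^sub>R w"] by simp
    hence "f a \<le> f (a + h *\<^sub>R w)" by (rule min)
    moreover have "f (a + h *\<^sub>R w) < f a" using dd2[OF h(1) h(3)] by simp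
    ultimately show False by simp
  qed
  have ni: "n $ i \<noteq> 0" for i unfolding n_def using nz[of i] by (simp add: sgn_if)
  hence "n \<noteq> 0" by (metis zero_index)
  hence nn: "n \<bullet> n > 0" by simp
  have gn: "g \<bullet> n \<le> 0" using K1[of "-n"] nn by simp
  have K3: "g \<bullet> w = 0" if nw: "n \<bullet> w = 0" for w
  proof (rule ccontr)
    assume gw: "g \<bullet> w \<noteq> 0"
    define t where "t = (g \<bullet> n - 1) / (g \<bullet> w)"
    have "n \<bullet> (t *\<^sub>R w - n) < 0" using nw nn by (simp add: inner_diff_right)
    hence "g \<bullet> (t *\<^sub>R w - n) \<ge> 0" by (rule K1)
    moreover have "g \<bullet> (t *\<^sub>R w - n) = -1" using gw by (simp add: inner_diff_right t_def)
    ultimately show False by simp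
  qed
  define \<mu> where "\<mu> = (g \<bullet> n) / (n \<bullet> n)"
  have "n \<bullet> (g - \<mu> *\<^sub>R n) = 0" using nn by (simp add: \<mu>_def inner_diff_right inner_commute)
  hence gw0: "g \<bullet> (g - \<mu> *\<^sub>R n) = 0" by (rule K3)
  have "(g - \<mu> *\<^sub>R n) \<bullet> (g - \<mu> *\<^sub>R n) = 0"
    using gw0 \<open>n \<bullet> (g - \<mu> *\<^sub>R n) = 0\<close> by (simp add: inner_diff_left)
  hence g_eq: "g = \<mu> *\<^sub>R n" by simp
  have mu_le: "\<mu> \<le> 0" unfolding \<mu>_def using gn nn by (simp add: divide_nonpos_pos)
  have mu_ne: "\<mu> \<noteq> 0" using g_eq g0 unfolding g_def by auto
  have mu_neg: "\<mu> < 0" using mu_le mu_ne by simp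
  have absa: "\<bar>a$i\<bar> > 0" for i using nz[of i] by simp
  have na: "n \<bullet> a = phi p a"
  proof -
    have "sgn (a$i) * \<bar>a$i\<bar> powr (p-1) * a$i = \<bar>a$i\<bar> powr p" for i
    proof -
      have s1: "sgn (a$i) * a$i = \<bar>a$i\<bar>" by (simp add: sgn_if)
      have s2: "\<bar>a$i\<bar> powr (p-1) * \<bar>a$i\<bar> = \<bar>a$i\<bar> powr p"
        using absa[of i] by (simp add: powr_diff)
      have "sgn (a$i) * \<bar>a$i\<bar> powr (p-1) * a$i = \<bar>a$i\<bar> powr (p-1) * (sgn (a$i) * a$i)"
        by (simp only: mult.commute mult.left_commute)
      also have "\<dots> = \<bar>a$i\<bar> powr p" using s1 s2 by simp
      finally show ?thesis .
    qed
    thus ?thesis unfolding n_def phi_def inner_vec_def by simp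
  qed
  have phipos: "phi p a > 0" unfolding phi_def using absa by (intro sum_pos) auto
  have phile: "phi p a \<le> 1" using aC ball_iff[OF p0(1), of a] by blast
  have phi1: "phi p a = 1"
  proof (rule ccontr)
    assume "phi p a \<noteq> 1"
    hence lt: "phi p a < 1" using phile by simp
    define r where "r = phi p a powr (-1/p)"
    have "phi p a powr (1/p) < 1 powr (1/p)" using lt phipos p0 by (intro powr_less_mono2) auto
    hence q: "phi p a powr (1/p) < 1" by simp
    have r_eq: "r = 1 / phi p a powr (1/p)" unfolding r_def using phipos
      by (simp add: powr_minus_divide)
    have r1: "r > 1" using q phipos unfolding r_eq by simp
    have rp: "r powr p = 1 / phi p a"
    proof -
      have e: "-1/p * p = -1" using p0 by simp
      have "r powr p = phi p a powr (-1/p * p)" unfolding r_def by (simp add: powr_powr)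
      also have "\<dots> = phi p a powr (-1)" using e by simp
      also have "\<dots> = 1 / phi p a" using phipos by (simp add: powr_minus divide_inverse)
      finally show ?thesis .
    qed
    have "phi p (r *\<^sub>R a) = r powr p * phi p a"
      unfolding phi_def using r1 by (simp add: abs_mult powr_mult sum_distrib_left)
    also have "\<dots> = 1" using rp phipos by simp
    finally have "r *\<^sub>R a \<in> lp_ball p" using ball_iff[OF p0(1), of "r *\<^sub>R a"] by simp
    hence "g \<bullet> (r *\<^sub>R a - a) \<ge> 0"
      unfolding g_def by (rule first_order[OF grad ball_convex[OF p0(2)] aC _ min])
    moreover have "g \<bullet> (r *\<^sub>R a - a) = (r - 1) * \<mu> * phi p a"
      using na by (simp add: g_eq inner_diff_right algebra_simps)
    moreover have "(r - 1) * \<mu> * phi p a < 0"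
      using r1 mu_neg phipos by (simp add: mult_pos_neg mult_neg_pos)
    ultimately show False by simp
  qed
  define k0 where "k0 = Min ((\<lambda>i. cc p \<bar>a$i\<bar>) ` UNIV)"
  have k0pos: "k0 > 0" unfolding k0_def using cc_pos[OF p] absa by (subst Min_gr_iff) auto
  have k0le: "k0 \<le> cc p \<bar>a$i\<bar>" for i unfolding k0_def by (rule Min_le) auto
  have grow: "-(p * (n \<bullet> (y - a))) \<ge> k0 * (norm (y - a))^2" if y: "y \<in> lp_ball p" for y
  proof -
    have b: "\<bar>y$i\<bar> powr p \<ge> \<bar>a$i\<bar> powr p + p * (n$i) * (y$i - a$i) + k0 * (y$i - a$i)^2" for i
    proof -
      have "\<bar>y$i\<bar> powr p \<ge> \<bar>a$i\<bar> powr p + p * (n$i) * (y$i - a$i) + cc p \<bar>a$i\<bar> * (y$i - a$i)^2"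
        using breg[OF p nz[of i] coord_bound[OF p0(1) aC] coord_bound[OF p0(1) y]] unfolding n_def by simp
      moreover have "k0 * (y$i - a$i)^2 \<le> cc p \<bar>a$i\<bar> * (y$i - a$i)^2"
        using k0le[of i] by (intro mult_right_mono) auto
      ultimately show ?thesis by linarith
    qed
    have "phi p y \<ge> (\<Sum>i\<in>UNIV. \<bar>a$i\<bar> powr p + p * (n$i) * (y$i - a$i) + k0 * (y$i - a$i)^2)"
      unfolding phi_def by (rule sum_mono) (rule b)
    also have "(\<Sum>i\<in>UNIV. \<bar>a$i\<bar> powr p + p * (n$i) * (y$i - a$i) + k0 * (y$i - a$i)^2)
        = phi p a + p * (n \<bullet> (y - a)) + k0 * (norm (y - a))^2"
      unfolding phi_def norm_sq_vec inner_vec_def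
      by (simp add: sum.distrib sum_distrib_left mult.assoc)
    finally have "phi p y \<ge> 1 + p * (n \<bullet> (y - a)) + k0 * (norm (y - a))^2" using phi1 by simp
    moreover have "phi p y \<le> 1" using y ball_iff[OF p0(1), of y] by blast
    ultimately show ?thesis by linarith
  qed
  show ?thesis
  proof (intro exI[of _ "(-\<mu>) * k0 / p"] conjI ballI)
    show "(-\<mu>) * k0 / p > 0" using mu_neg k0pos p0 by (intro divide_pos_pos mult_pos_pos) auto
  next
    fix y :: "real^'m" assume y: "y \<in> lp_ball p"
    have "f' a \<bullet> (y - a) = (-\<mu>) / p * (-(p * (n \<bullet> (y - a))))"
      using p0 by (simp add: g_def[symmetric] g_eq)
    also have "\<dots> \<ge> (-\<mu>) / p * (k0 * (norm (y - a))^2)"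
      using grow[OF y] mu_neg p0 by (intro mult_left_mono) (auto simp: divide_nonpos_pos)
    finally show "(-\<mu>) * k0 / p * (norm (y - a))^2 \<le> f' a \<bullet> (y - a)" by simp
  qed
qed



lemma cocoercive:
  fixes f :: "real^'m \<Rightarrow> real" and f' :: "real^'m \<Rightarrow> real^'m"
  assumes grad: "\<And>y. (f has_derivative (\<lambda>h. f' y \<bullet> h)) (at y)"
    and cvx: "convex_on UNIV f"
    and smooth: "\<And>y z. norm (f' y - f' z) \<le> L * norm (y - z)"
    and L: "L > 0"
  shows "(norm (f' x - f' a))^2 \<le> 2 * L * (f x - f a - f' a \<bullet> (x - a))"
proof -
  define e where "e = f' x - f' a"
  define d where "d = (-(1/L)) *\<^sub>R e"
  have up: "f (x + 1 *\<^sub>R d) \<le> f x + 1 * (f' x \<bullet> d) + L/2 * 1^2 * (norm d)^2"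
    by (rule descent[OF grad smooth]) (use L in auto)
  have lo: "f (x + d) \<ge> f a + f' a \<bullet> (x + d - a)" by (rule grad_ineq[OF grad cvx])
  have e1: "f' a \<bullet> (x + d - a) = f' a \<bullet> (x - a) + f' a \<bullet> d" by (simp add: algebra_simps inner_add_right inner_diff_right)
  have e2: "f' a \<bullet> d - f' x \<bullet> d = (1/L) * (norm e)^2"
    unfolding d_def e_def by (simp add: power2_norm_eq_inner inner_diff_left algebra_simps)
  have e3: "(norm d)^2 = (norm e)^2 / L^2"
    unfolding d_def using L by (simp add: power2_eq_square)
  have "f x - f a - f' a \<bullet> (x - a) \<ge> f' a \<bullet> d - f' x \<bullet> d - L/2 * (norm d)^2"
    using up lo e1 by simp
  also have "f' a \<bullet> d - f' x \<bullet> d - L/2 * (norm d)^2 = (norm e)^2 / (2*L)"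
    using L unfolding e2 e3 by (simp add: field_simps power2_eq_square)
  finally have "(norm e)^2 / (2*L) \<le> f x - f a - f' a \<bullet> (x - a)" .
  thus ?thesis using L unfolding e_def by (simp add: divide_le_eq mult.commute)
qed



theorem mainTheorem3:
  fixes p L c :: real
    and f :: "real ^ 'm \<Rightarrow> real"
    and f' :: "real ^ 'm \<Rightarrow> real ^ 'm"
    and xstar :: "real ^ 'm"
    and x v :: "nat \<Rightarrow> real ^ 'm"
    and \<gamma> :: "nat \<Rightarrow> real"
  assumes p: "p > 2"
    and grad: "\<And>y. (f has_derivative (\<lambda>h. f' y \<bullet> h)) (at y)"
    and cvx: "convex_on UNIV f"
    and L: "L > 0"
    and smooth: "\<And>y z. norm (f' y - f' z) \<le> L * norm (y - z)"
    and c: "c > 0"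
    and gradbd: "(INF y\<in>lp_ball p. norm (f' y)) > c"
    and xstar_min: "xstar \<in> lp_ball p" "\<And>y. y \<in> lp_ball p \<Longrightarrow> f xstar \<le> f y"
    and xstar_nz: "\<And>i. xstar $ i \<noteq> 0"
    and x0: "x 0 \<in> lp_ball p"
    and lmo: "\<And>t. fw_lmo (lp_ball p) (f' (x t)) (v t)"
    and upd: "\<And>t. x (Suc t) = x t + \<gamma> t *\<^sub>R (v t - x t)"
    and steps: "(\<forall>t. exact_ls f (x t) (v t) (\<gamma> t)) \<or>
                (\<forall>t. \<gamma> t = short_step L (f' (x t)) (x t) (v t))"
  shows "\<exists>K > 0. \<exists>\<rho>. 0 < \<rho> \<and> \<rho> < 1 \<and> (\<forall>t. f (x t) - f xstar \<le> K * \<rho> ^ t)"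
proof -
  define a where "a = xstar"
  define C :: "(real^'m) set" where "C = lp_ball p"
  have p0: "p > 0" "p \<ge> 1" using p by auto
  have Cc: "convex C" unfolding C_def by (rule ball_convex[OF p0(2)])
  have aC: "a \<in> C" unfolding a_def C_def by (rule xstar_min(1))
  have amin: "f a \<le> f y" if "y \<in> C" for y using xstar_min(2) that unfolding a_def C_def by blast
  have vC: "v t \<in> C" and vmin: "\<And>u. u \<in> C \<Longrightarrow> f' (x t) \<bullet> v t \<le> f' (x t) \<bullet> u" for t
    using lmo[of t] unfolding fw_lmo_def C_def by auto
  have g0: "f' a \<noteq> 0"
  proof -
    have "(INF y\<in>lp_ball p. norm (f' y)) \<le> norm (f' a)"
      using aC unfolding C_def by (intro cINF_lower) (auto intro: bdd_belowI[of _ 0])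
    thus ?thesis using gradbd c by auto
  qed
  obtain \<kappa> where kp: "\<kappa> > 0" and kg: "\<And>y. y \<in> C \<Longrightarrow> f' a \<bullet> (y - a) \<ge> \<kappa> * (norm (y - a))^2"
    using growth[OF p grad xstar_min(1) xstar_min(2) xstar_nz, folded a_def] g0 unfolding C_def by blast
  define G where "G t = f' (x t) \<bullet> (x t - v t)" for t
  define h where "h t = f (x t) - f a" for t
  define S where "S t = short_step L (f' (x t)) (x t) (v t)" for t
  have S_eq: "S t = min 1 (G t / (L * (norm (v t - x t))^2))" for t
    unfolding S_def short_step_def G_def by simp
  have step_ok: "G t \<ge> 0 \<and> \<gamma> t \<in> {0..1} \<and> x (Suc t) \<in> C" if xt: "x t \<in> C" for t
  proof -
    have Gt: "G t \<ge> 0" using vmin[OF xt, of t] unfolding G_def by (simp add: inner_diff_right)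
    have S01: "S t \<in> {0..1}" unfolding S_eq using Gt L by auto
    have g01: "\<gamma> t \<in> {0..1}" using steps S01 unfolding exact_ls_def S_def by auto
    have "x (Suc t) = (1 - \<gamma> t) *\<^sub>R x t + \<gamma> t *\<^sub>R v t" unfolding upd by (simp add: algebra_simps)
    also have "\<dots> \<in> C" using Cc xt vC[of t] g01 unfolding convex_def by auto
    finally show ?thesis using Gt g01 by simp
  qed
  have xC: "x t \<in> C" for t
  proof (induction t)
    case 0 show ?case using x0 unfolding C_def .
  next
    case (Suc t) thus ?case using step_ok by blast
  qed
  have Gnn: "G t \<ge> 0" for t using step_ok[OF xC] by blast
  have hnn: "h t \<ge> 0" for t unfolding h_def using amin[OF xC[of t]] by simp
  have hG: "h t \<le> G t" for t
  proof -
    have "f a \<ge> f (x t) + f' (x t) \<bullet> (a - x t)" by (rule grad_ineq[OF grad cvx])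
    moreover have "f' (x t) \<bullet> v t \<le> f' (x t) \<bullet> a" by (rule vmin[OF aC])
    ultimately show ?thesis unfolding h_def G_def by (simp add: inner_diff_right)
  qed
  have ax: "\<kappa> * (norm (x t - a))^2 \<le> f' a \<bullet> (x t - a)" and axh: "f' a \<bullet> (x t - a) \<le> h t" for t
  proof -
    show "\<kappa> * (norm (x t - a))^2 \<le> f' a \<bullet> (x t - a)" by (rule kg[OF xC])
    have "f (x t) \<ge> f a + f' a \<bullet> (x t - a)" by (rule grad_ineq[OF grad cvx])
    thus "f' a \<bullet> (x t - a) \<le> h t" unfolding h_def by simp
  qed
  have H2: "(norm (x t - a))^2 \<le> h t / \<kappa>" for t
    using ax[of t] axh[of t] kp by (simp add: le_divide_eq mult.commute)
  have H4: "(norm (v t - a))^2 \<le> 2 * L * h t / \<kappa>^2" for t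
  proof -
    define e where "e = f' (x t) - f' a"
    have "\<kappa> * (norm (v t - a))^2 \<le> f' a \<bullet> (v t - a)" by (rule kg[OF vC])
    also have "\<dots> \<le> f' a \<bullet> (v t - a) - f' (x t) \<bullet> (v t - a)"
      using vmin[OF aC, of t] by (simp add: inner_diff_right)
    also have "\<dots> = - (e \<bullet> (v t - a))" unfolding e_def by (simp add: inner_diff_left)
    also have "\<dots> \<le> norm e * norm (v t - a)"
      using norm_cauchy_schwarz[of "-e" "v t - a"] by simp
    finally have k1: "\<kappa> * (norm (v t - a))^2 \<le> norm e * norm (v t - a)" .
    have k2: "\<kappa> * norm (v t - a) \<le> norm e"
    proof (cases "norm (v t - a) = 0")
      case True thus ?thesis by simp
    next
      case False
      hence pos: "norm (v t - a) > 0" by simp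
      have "(\<kappa> * norm (v t - a)) * norm (v t - a) \<le> norm e * norm (v t - a)"
        using k1 by (simp add: power2_eq_square mult.assoc)
      thus ?thesis using pos by simp
    qed
    have "(\<kappa> * norm (v t - a))^2 \<le> (norm e)^2"
      using k2 kp by (intro power_mono) auto
    also have "\<dots> \<le> 2 * L * (f (x t) - f a - f' a \<bullet> (x t - a))"
      unfolding e_def by (rule cocoercive[OF grad cvx smooth L])
    also have "\<dots> \<le> 2 * L * h t"
      using ax[of t] kp L unfolding h_def
      by (intro mult_left_mono) (auto intro: order_trans[OF mult_nonneg_nonneg[OF less_imp_le[OF kp] zero_le_power2]])
    finally have "\<kappa>^2 * (norm (v t - a))^2 \<le> 2 * L * h t" by (simp add: power_mult_distrib)
    thus ?thesis using kp by (simp add: le_divide_eq mult.commute)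
  qed
  define B where "B = 2 / \<kappa> + 4 * L / \<kappa>^2"
  have Bpos: "B > 0" unfolding B_def using kp L by (intro add_pos_pos divide_pos_pos) auto
  have H5: "(norm (v t - x t))^2 \<le> B * h t" for t
  proof -
    have "norm (v t - x t) \<le> norm (v t - a) + norm (x t - a)"
      using norm_triangle_ineq4[of "v t - a" "x t - a"] by simp
    hence "(norm (v t - x t))^2 \<le> (norm (v t - a) + norm (x t - a))^2"
      by (intro power_mono) auto
    also have "\<dots> \<le> 2 * (norm (v t - a))^2 + 2 * (norm (x t - a))^2"
      using zero_le_power2[of "norm (v t - a) - norm (x t - a)"] by (simp add: power2_eq_square algebra_simps)
    also have "\<dots> \<le> 2 * (2 * L * h t / \<kappa>^2) + 2 * (h t / \<kappa>)"
      using H2[of t] H4[of t] by simp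
    also have "\<dots> = B * h t" unfolding B_def by (simp add: field_simps)
    finally show ?thesis .
  qed
  define \<epsilon> where "\<epsilon> = min (1/2) (1 / (2 * L * B))"
  have eps: "\<epsilon> > 0" "\<epsilon> \<le> 1/2" "\<epsilon> \<le> 1 / (2 * L * B)" unfolding \<epsilon>_def using L Bpos by auto
  have prog: "h (Suc t) \<le> (1 - \<epsilon>) * h t" for t
  proof -
    define d where "d = v t - x t"
    define D where "D = (norm d)^2"
    define s where "s = S t"
    have Gd: "f' (x t) \<bullet> d = - G t" unfolding d_def G_def by (simp add: inner_diff_right)
    have s01: "s \<in> {0..1}" unfolding s_def S_eq using Gnn[of t] L by auto
    have first: "f (x (Suc t)) \<le> f (x t + s *\<^sub>R d)"
      using steps
    proof
      assume "\<forall>t. exact_ls f (x t) (v t) (\<gamma> t)"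
      thus ?thesis using s01 unfolding exact_ls_def upd d_def by auto
    next
      assume "\<forall>t. \<gamma> t = short_step L (f' (x t)) (x t) (v t)"
      thus ?thesis unfolding upd d_def s_def S_def by simp
    qed
    have desc: "f (x t + s *\<^sub>R d) \<le> f (x t) + s * (- G t) + L/2 * s^2 * D"
      using descent[OF grad smooth, of s "x t" d] L s01 Gd unfolding D_def by simp
    have key: "s * (- G t) + L/2 * s^2 * D \<le> - (\<epsilon> * h t)"
    proof (cases "D = 0")
      case True
      hence "d = 0" unfolding D_def by simp
      hence G0: "G t = 0" using Gd by simp
      hence "h t = 0" using hG[of t] hnn[of t] by simp
      thus ?thesis using True G0 by simp
    next
      case False
      hence Dpos: "D > 0" unfolding D_def by simp
      show ?thesis
      proof (cases "G t \<ge> L * D")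
        case True
        hence "G t / (L * D) \<ge> 1" using Dpos L by (simp add: le_divide_eq)
        hence s1: "s = 1" unfolding s_def S_eq D_def[symmetric] d_def[symmetric] by simp
        have "s * (- G t) + L/2 * s^2 * D \<le> - G t / 2" using s1 True by simp
        also have "\<dots> \<le> - (h t / 2)" using hG[of t] by simp
        also have "\<dots> \<le> - (\<epsilon> * h t)"
          using mult_right_mono[OF eps(2) hnn[of t]] by simp
        finally show ?thesis .
      next
        case False
        hence "G t / (L * D) < 1" using Dpos L by (simp add: divide_less_eq)
        hence s1: "s = G t / (L * D)" unfolding s_def S_eq D_def[symmetric] d_def[symmetric] by simp
        have val: "s * (- G t) + L/2 * s^2 * D = - ((G t)^2 / (2 * L * D))"
          unfolding s1 using Dpos L by (simp add: field_simps power2_eq_square)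
        have DB: "D \<le> B * G t"
          using order_trans[OF H5[of t] mult_left_mono[OF hG[of t] less_imp_le[OF Bpos]]]
          unfolding D_def d_def .
        have "\<epsilon> * h t \<le> (1 / (2 * L * B)) * h t" by (rule mult_right_mono[OF eps(3) hnn[of t]])
        also have "\<dots> = h t / (2 * L * B)" by simp
        also have "\<dots> \<le> G t / (2 * L * B)" using hG[of t] L Bpos by (intro divide_right_mono) auto
        also have "\<dots> \<le> (G t)^2 / (2 * L * D)"
        proof -
          have Lne: "L \<noteq> 0" "D \<noteq> 0" "B \<noteq> 0" using L Dpos Bpos by auto
          have eq: "(G t)^2 / (2 * L * D) - G t / (2 * L * B) = G t * (B * G t - D) / (2 * L * D * B)"
            using Lne by (simp add: field_simps power2_eq_square)
          have "G t * (B * G t - D) / (2 * L * D * B) \<ge> 0"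
            using Gnn[of t] DB L Dpos Bpos by (intro divide_nonneg_pos mult_nonneg_nonneg) auto
          thus ?thesis using eq by linarith
        qed
        finally show ?thesis using val by simp
      qed
    qed
    show ?thesis using first desc key unfolding h_def by (simp add: algebra_simps)
  qed
  have hbound: "h t \<le> h 0 * (1 - \<epsilon>)^t" for t
  proof (induction t)
    case 0 show ?case by simp
  next
    case (Suc t)
    have "h (Suc t) \<le> (1 - \<epsilon>) * h t" by (rule prog)
    also have "\<dots> \<le> (1 - \<epsilon>) * (h 0 * (1 - \<epsilon>)^t)" using Suc eps by (intro mult_left_mono) auto
    finally show ?case by (simp add: algebra_simps)
  qed
  have A1: "h 0 + 1 > 0" using hnn[of 0] by simp
  have A2: "0 < 1 - \<epsilon>" "1 - \<epsilon> < 1" using eps by auto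
  have A3: "f (x t) - f xstar \<le> (h 0 + 1) * (1 - \<epsilon>)^t" for t
  proof -
    have "h t \<le> h 0 * (1 - \<epsilon>)^t" by (rule hbound)
    also have "\<dots> \<le> (h 0 + 1) * (1 - \<epsilon>)^t" using eps by (intro mult_right_mono) auto
    finally show ?thesis unfolding h_def a_def .
  qed
  show ?thesis using A1 A2 A3 by blast
qed


end
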